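(* For every order $N\in\mathbb N_{\ge3}$ and mode dimensions $D_1,\dots,D_N\in\mathbb N_{\ge2}$, there exist a ground truth $\mathcal W^*\in\mathbb R^{D_1\times\cdots\times D_N}$ and a set of observed entries $\Omega\subset[D_1]\times\cdots\times[D_N]$, defining the loss $\mathcal L(\mathcal W)=\frac1{|\Omega|}\sum_{(d_1,\dots,d_N)\in\Omega}(\mathcal W_{d_1,\dots,d_N}-\mathcal W^*_{d_1,\dots,d_N})^2$, such that for every mode tree $\mathcal T$ over $[N]$ the set $$\mathcal R_{\mathcal T}:=\big\{(\mathrm{rank}\,[\![\mathcal W;\nu]\!])_{\nu\in\mathcal T\setminus\{[N]\}}:\ \mathcal W\in\mathbb R^{D_1\times\cdots\times D_N},\ \mathcal L(\mathcal W)=0\big\}$$ contains elements $(R_\nu)_\nu$ and $(R'_\nu)_\nu$ such that: (i) there is no $(R''_\nu)_\nu\in\mathcal R_{\mathcal T}\setminus\{(R_\nu)_\nu,(R'_\nu)_\nu\}$ with $(R''_\nu)_\nu\le(R_\nu)_\nu$ or $(R''_\nu)_\nu\le(R'_\nu)_\nu$; and (ii) neither $(R_\nu)_\nu\le(R'_\nu)_\nu$ nor $(R'_\nu)_\nu\le(R_\nu)_\nu$. Here $\le$ is the entrywise (product) partial order on tuples indexed by $\mathcal T\setminus\{[N]\}$.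
   Context: $[K]:=\{1,\dots,K\}$. A mode tree $\mathcal T$ over $[N]$ is a rooted tree whose nodes are labeled by subsets of $[N]$, with exactly $N$ leaves labeled $\{1\},\dots,\{N\}$, and where each interior node's label is the union of its children's labels; nodes are identified with their labels (so $\mathcal T\subset 2^{[N]}$) and the root is $[N]$. The matricization $[\![\mathcal W;I]\!]$ of $\mathcal W\in\mathbb R^{D_1\times\cdots\times D_N}$ w.r.t. $I\subset[N]$ is its arrangement as a $\prod_{i\in I}D_i\times\prod_{j\notin I}D_j$ matrix whose rows are indexed by the modes in $I$ and columns by the remaining modes (entry $\mathcal W_{d_1,\dots,d_N}$ goes to row $1+\sum_l(d_{i_l}-1)\prod_{l'<l}D_{i_{l'}}$ and column $1+\sum_l(d_{j_l}-1)\prod_{l'<l}D_{j_{l'}}$, where $I=\{i_1<\cdots\}$, $[N]\setminus I=\{j_1<\cdots\}$). The tuple $(\mathrm{rank}\,[\![\mathcal W;\nu]\!])_{\nu\in\mathcal T\setminus\{[N]\}}$ is the hierarchical tensor rank of $\mathcal W$ w.r.t. $\mathcal T$. *)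

theory Defs
  imports Main "Jordan_Normal_Form.DL_Rank"
begin

text \<open>Modes are 1,...,N; a tensor of order N with mode dimensions D 1,...,D N is a
  function from index functions to reals. Its entries are the values on the index
  functions d with d i in {1..D i} for i in {1..N} and d i = 0 otherwise.\<close>

type_synonym tensor = "(nat \<Rightarrow> nat) \<Rightarrow> real"

definition tensor_idx :: "nat \<Rightarrow> (nat \<Rightarrow> nat) \<Rightarrow> (nat \<Rightarrow> nat) set" where
  "tensor_idx N D = {d. (\<forall>i\<in>{1..N}. d i \<in> {1..D i}) \<and> (\<forall>i. i \<notin> {1..N} \<longrightarrow> d i = 0)}"

text \<open>Mixed-radix decoding: inverse of the row/column index formula of the matricization
  (0-based row index r corresponds to the paper's row r+1).\<close>
definition mdecode :: "nat set \<Rightarrow> (nat \<Rightarrow> nat) \<Rightarrow> nat \<Rightarrow> nat \<Rightarrow> nat" where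
  "mdecode I D r i = 1 + (r div (\<Prod>i'\<in>{i'\<in>I. i' < i}. D i')) mod D i"

definition matricize :: "nat \<Rightarrow> (nat \<Rightarrow> nat) \<Rightarrow> tensor \<Rightarrow> nat set \<Rightarrow> real mat" where
  "matricize N D W I = mat (\<Prod>i\<in>I. D i) (\<Prod>j\<in>{1..N} - I. D j)
     (\<lambda>(r, c). W (\<lambda>i. if i \<in> I then mdecode I D r i
                      else if i \<in> {1..N} then mdecode ({1..N} - I) D c i else 0))"

definition mat_rank :: "real mat \<Rightarrow> nat" where
  "mat_rank A = vec_space.rank (dim_row A) A"

text \<open>Mode trees over a set S of modes, with nodes identified with their labels:
  either a single leaf {i}, or a root S whose children subtrees are mode trees over the
  blocks of a partition of S.\<close>
inductive mode_tree :: "nat set \<Rightarrow> nat set set \<Rightarrow> bool" where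
  leaf: "mode_tree {i} {{i}}"
| node: "\<lbrakk> finite P; P \<noteq> {}; \<forall>B\<in>P. B \<noteq> {}; pairwise disjnt P; \<Union>P = S;
           \<forall>B\<in>P. mode_tree B (Tt B) \<rbrakk> \<Longrightarrow> mode_tree S (insert S (\<Union>B\<in>P. Tt B))"

definition loss :: "nat \<Rightarrow> (nat \<Rightarrow> nat) \<Rightarrow> tensor \<Rightarrow> (nat \<Rightarrow> nat) set \<Rightarrow> tensor \<Rightarrow> real" where
  "loss N D Wstar \<Omega> W = (1 / real (card \<Omega>)) * (\<Sum>d\<in>\<Omega>. (W d - Wstar d)\<^sup>2)"

text \<open>Hierarchical tensor rank, as a tuple indexed by T - {[N]} (value 0 outside).\<close>
definition htrank :: "nat \<Rightarrow> (nat \<Rightarrow> nat) \<Rightarrow> nat set set \<Rightarrow> tensor \<Rightarrow> (nat set \<Rightarrow> nat)" where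
  "htrank N D T W = (\<lambda>\<nu>. if \<nu> \<in> T - {{1..N}} then mat_rank (matricize N D W \<nu>) else 0)"

definition rank_set :: "nat \<Rightarrow> (nat \<Rightarrow> nat) \<Rightarrow> nat set set \<Rightarrow> tensor \<Rightarrow> (nat \<Rightarrow> nat) set
                        \<Rightarrow> (nat set \<Rightarrow> nat) set" where
  "rank_set N D T Wstar \<Omega> = {htrank N D T W | W. loss N D Wstar \<Omega> W = 0}"

definition tuple_le :: "nat \<Rightarrow> nat set set \<Rightarrow> (nat set \<Rightarrow> nat) \<Rightarrow> (nat set \<Rightarrow> nat) \<Rightarrow> bool" where
  "tuple_le N T R R' = (\<forall>\<nu>\<in>T - {{1..N}}. R \<nu> \<le> R' \<nu>)"

end

theory Submission
  imports Defs "Jordan_Normal_Form.DL_Rank_Submatrix"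
begin


definition enc :: "nat set \<Rightarrow> (nat \<Rightarrow> nat) \<Rightarrow> (nat \<Rightarrow> nat) \<Rightarrow> nat" where
  "enc I D d = (\<Sum>i\<in>I. (d i - 1) * (\<Prod>i'\<in>{i'\<in>I. i' < i}. D i'))"

lemma enc_dec:
  assumes "finite I"
  shows "(\<forall>i\<in>I. 1 \<le> d i \<and> d i \<le> D i) \<longrightarrow>
    enc I D d < (\<Prod>i\<in>I. D i) \<and> (\<forall>i\<in>I. mdecode I D (enc I D d) i = d i)"
  using assms
proof (induction I rule: finite_linorder_max_induct)
  case empty
  then show ?case by (simp add: enc_def)
next
  case (insert b A)
  show ?case
  proof
    assume H: "\<forall>i\<in>insert b A. 1 \<le> d i \<and> d i \<le> D i"
    have bA: "b \<notin> A" using insert.hyps by auto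
    define P where "P = (\<Prod>i\<in>A. D i)"
    define e where "e = enc A D d"
    from insert.IH H have IH: "e < P" "\<forall>i\<in>A. mdecode A D e i = d i"
      by (auto simp: e_def P_def)
    have setb: "{i'\<in>insert b A. i' < b} = A" using insert.hyps by auto
    have seti: "{i'\<in>insert b A. i' < i} = {i'\<in>A. i' < i}" if "i \<in> A" for i
      using insert.hyps that by auto
    have encI: "enc (insert b A) D d = e + (d b - 1) * P"
    proof -
      have "enc (insert b A) D d = (d b - 1) * (\<Prod>i'\<in>{i'\<in>insert b A. i' < b}. D i')
         + (\<Sum>i\<in>A. (d i - 1) * (\<Prod>i'\<in>{i'\<in>insert b A. i' < i}. D i'))"
        unfolding enc_def by (rule sum.insert[OF insert.hyps(1) bA])
      also have "(\<Sum>i\<in>A. (d i - 1) * (\<Prod>i'\<in>{i'\<in>insert b A. i' < i}. D i')) = e"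
        unfolding e_def enc_def by (rule sum.cong, simp, simp only: seti)
      finally show ?thesis by (simp only: setb P_def add.commute)
    qed
    have Dpos: "\<forall>i\<in>insert b A. 0 < D i" using H by fastforce
    have Ppos: "0 < P" unfolding P_def using Dpos by (simp add: prod_pos)
    have bound: "e + (d b - 1) * P < (\<Prod>i\<in>insert b A. D i)"
    proof -
      have "e + (d b - 1) * P < P + (d b - 1) * P" using IH by simp
      also have "\<dots> = d b * P" using H by (cases "d b") auto
      also have "\<dots> \<le> D b * P" using H by simp
      also have "\<dots> = (\<Prod>i\<in>insert b A. D i)" using insert.hyps bA by (simp add: P_def)
      finally show ?thesis .
    qed
    have decb: "mdecode (insert b A) D (e + (d b - 1) * P) b = d b"
    proof -
      have "(e + (d b - 1) * P) div P = d b - 1" using IH Ppos by simp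
      moreover have "(d b - 1) mod D b = d b - 1" using H by auto
      ultimately show ?thesis using H unfolding mdecode_def setb P_def by auto
    qed
    have deci: "mdecode (insert b A) D (e + (d b - 1) * P) i = d i" if iA: "i \<in> A" for i
    proof -
      define Q where "Q = (\<Prod>i'\<in>{i'\<in>A. i' < i}. D i')"
      define Q2 where "Q2 = (\<Prod>i'\<in>{i'\<in>A. i < i'}. D i')"
      have Qpos: "0 < Q" unfolding Q_def using Dpos by (simp add: prod_pos)
      have Asplit: "A = {i'\<in>A. i' < i} \<union> ({i} \<union> {i'\<in>A. i < i'})" using iA by auto
      have "P = Q * (D i * Q2)" unfolding P_def Q_def Q2_def
        apply (subst Asplit)
        apply (subst prod.union_disjoint)
        using insert.hyps apply auto[3]
        apply (subst prod.union_disjoint)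
        using insert.hyps apply auto
        done
      then have X: "e + (d b - 1) * P = e + (((d b - 1) * Q2) * D i) * Q" by (simp add: ac_simps)
      have "(e + (d b - 1) * P) div Q = e div Q + ((d b - 1) * Q2) * D i"
        unfolding X using Qpos by (subst div_mult_self1) auto
      then have "(e + (d b - 1) * P) div Q mod D i = e div Q mod D i" by simp
      then have "mdecode (insert b A) D (e + (d b - 1) * P) i = mdecode A D e i"
        unfolding mdecode_def seti[OF iA] Q_def by simp
      then show ?thesis using IH iA by simp
    qed
    show "enc (insert b A) D d < (\<Prod>i\<in>insert b A. D i) \<and>
        (\<forall>i\<in>insert b A. mdecode (insert b A) D (enc (insert b A) D d) i = d i)"
      using bound decb deci by (simp add: encI)
  qed
qed



lemma det2: assumes "A \<in> carrier_mat 2 2"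
  shows "det A = A $$ (0,0) * A $$ (1,1) - A $$ (0,1) * A $$ (1,0)"
  using assms
  apply (subst laplace_expansion_column[OF assms, of 0])
  apply (auto simp: cofactor_def mat_delete_def numeral_2_eq_2 lessThan_Suc det_single)
  done

lemma pick2: assumes "a < (b::nat)" shows "pick {a,b} 0 = a" "pick {a,b} (Suc 0) = b"
proof -
  show 1: "pick {a,b} 0 = a" using assms by (auto intro!: Least_equality)
  have "pick {a,b} (Suc 0) = (LEAST x. x \<in> {a,b} \<and> x > a)" using 1 by simp
  also have "\<dots> = b" using assms by (intro Least_equality, auto)
  finally show "pick {a,b} (Suc 0) = b" .
qed

lemma card2: assumes "a < (b::nat)" "b < n" shows "card {i. i < n \<and> i \<in> {a,b}} = 2"
proof -
  have "{i. i < n \<and> i \<in> {a,b}} = {a,b}" using assms by auto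
  then show ?thesis using assms by simp
qed

lemma rank_ge2_ord:
  fixes A :: "real mat"
  assumes A: "A \<in> carrier_mat n nc" and r: "r1 < r2" "r2 < n" and c: "c1 < c2" "c2 < nc"
    and ne: "A$$(r1,c1)*A$$(r2,c2) \<noteq> A$$(r1,c2)*A$$(r2,c1)"
  shows "2 \<le> mat_rank A"
proof -
  let ?S = "submatrix A {r1,r2} {c1,c2}"
  have dims: "dim_row ?S = 2" "dim_col ?S = 2" using A r c card2[of r1 r2 n] card2[of c1 c2 nc] by (auto simp: dim_submatrix)
  have S: "?S \<in> carrier_mat 2 2" using dims by auto
  have e: "?S $$ (i,j) = A $$ (pick {r1,r2} i, pick {c1,c2} j)" if "i < 2" "j < 2" for i j
    using submatrix_index[of i A "{r1,r2}" j "{c1,c2}"] that A r c card2[of r1 r2 n] card2[of c1 c2 nc] by auto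
  have "det ?S = A$$(r1,c1)*A$$(r2,c2) - A$$(r1,c2)*A$$(r2,c1)"
    using det2[OF S] e[of 0 0] e[of 1 1] e[of 0 1] e[of 1 0] pick2[OF r(1)] pick2[OF c(1)]
    by (simp del: pick.simps)
  then have "det ?S \<noteq> 0" using ne by simp
  then have "card {j. j < nc \<and> j \<in> {c1,c2}} \<le> vec_space.rank n A"
    using vec_space.rank_gt_minor[OF A] by blast
  then show ?thesis using A c card2[of c1 c2 nc] by (simp add: mat_rank_def)
qed

lemma rank_ge2:
  fixes A :: "real mat"
  assumes A: "A \<in> carrier_mat n nc" and r: "r1 \<noteq> r2" "r1 < n" "r2 < n" and c: "c1 \<noteq> c2" "c1 < nc" "c2 < nc"
    and ne: "A$$(r1,c1)*A$$(r2,c2) \<noteq> A$$(r1,c2)*A$$(r2,c1)"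
  shows "2 \<le> mat_rank A"
proof (cases "r1 < r2")
  case True
  show ?thesis
  proof (cases "c1 < c2")
    case True
    then show ?thesis using rank_ge2_ord[OF A \<open>r1<r2\<close> r(3) True c(3) ne] by simp
  next
    case False
    then have "c2 < c1" using c by auto
    then show ?thesis using rank_ge2_ord[OF A \<open>r1<r2\<close> r(3) _ c(2), of c2] ne by (auto simp: mult.commute)
  qed
next
  case False
  then have r21: "r2 < r1" using r by auto
  show ?thesis
  proof (cases "c1 < c2")
    case True
    then show ?thesis using rank_ge2_ord[OF A r21 r(2) True c(3)] ne by (auto simp: mult.commute)
  next
    case False
    then have "c2 < c1" using c by auto
    then show ?thesis using rank_ge2_ord[OF A r21 r(2) _ c(2), of c2] ne by (auto simp: mult.commute)
  qed
qed

lemma rank_ge1: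
  fixes A :: "real mat"
  assumes A: "A \<in> carrier_mat n nc" and r: "r < n" and c: "c < nc" and ne: "A$$(r,c) \<noteq> 0"
  shows "1 \<le> mat_rank A"
proof -
  let ?S = "submatrix A {r} {c}"
  have c1: "card {i. i < n \<and> i \<in> {r}} = 1" "card {i. i < nc \<and> i \<in> {c}} = 1"
    using r c by (auto simp: card_1_singleton_iff) 
  have S: "?S \<in> carrier_mat 1 1" using A c1 by (auto simp: dim_submatrix)
  have "?S $$ (0,0) = A $$ (r,c)"
    using submatrix_index[of 0 A "{r}" 0 "{c}"] A c1 by (auto simp: Least_equality)
  then have "det ?S \<noteq> 0" using ne det_single[OF S] by simp
  then have "card {j. j < nc \<and> j \<in> {c}} \<le> vec_space.rank n A"
    using vec_space.rank_gt_minor[OF A] by blast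
  then show ?thesis using A c1 by (simp add: mat_rank_def)
qed



definition mix :: "nat \<Rightarrow> nat set \<Rightarrow> (nat \<Rightarrow> nat) \<Rightarrow> (nat \<Rightarrow> nat) \<Rightarrow> (nat \<Rightarrow> nat)" where
  "mix N \<nu> x y = (\<lambda>i. if i \<in> \<nu> then x i else if i \<in> {1..N} then y i else 0)"

definition valid :: "nat \<Rightarrow> (nat \<Rightarrow> nat) \<Rightarrow> (nat \<Rightarrow> nat) \<Rightarrow> bool" where
  "valid N D x = (\<forall>i\<in>{1..N}. 1 \<le> x i \<and> x i \<le> D i)"

lemma mat_entry:
  assumes sub: "\<nu> \<subseteq> {1..N}" and vx: "valid N D x" and vy: "valid N D y"
  shows "matricize N D W \<nu> \<in> carrier_mat (\<Prod>i\<in>\<nu>. D i) (\<Prod>j\<in>{1..N} - \<nu>. D j)"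
    "enc \<nu> D x < (\<Prod>i\<in>\<nu>. D i)"
    "enc ({1..N} - \<nu>) D y < (\<Prod>j\<in>{1..N} - \<nu>. D j)"
    "matricize N D W \<nu> $$ (enc \<nu> D x, enc ({1..N} - \<nu>) D y) = W (mix N \<nu> x y)"
proof -
  have f1: "finite \<nu>" using sub finite_subset by blast
  have f2: "finite ({1..N} - \<nu>)" by simp
  have h1: "\<forall>i\<in>\<nu>. 1 \<le> x i \<and> x i \<le> D i" using vx sub unfolding valid_def by auto
  have h2: "\<forall>i\<in>{1..N} - \<nu>. 1 \<le> y i \<and> y i \<le> D i" using vy unfolding valid_def by auto
  have e1: "enc \<nu> D x < (\<Prod>i\<in>\<nu>. D i) \<and> (\<forall>i\<in>\<nu>. mdecode \<nu> D (enc \<nu> D x) i = x i)"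
    using enc_dec[OF f1, of x D] h1 by blast
  have e2: "enc ({1..N} - \<nu>) D y < (\<Prod>i\<in>{1..N} - \<nu>. D i) \<and>
     (\<forall>i\<in>{1..N} - \<nu>. mdecode ({1..N} - \<nu>) D (enc ({1..N} - \<nu>) D y) i = y i)"
    using enc_dec[OF f2, of y D] h2 by blast
  show "matricize N D W \<nu> \<in> carrier_mat (\<Prod>i\<in>\<nu>. D i) (\<Prod>j\<in>{1..N} - \<nu>. D j)"
    unfolding matricize_def by simp
  show "enc \<nu> D x < (\<Prod>i\<in>\<nu>. D i)" using e1 by simp
  show "enc ({1..N} - \<nu>) D y < (\<Prod>j\<in>{1..N} - \<nu>. D j)" using e2 by simp
  have fe: "(\<lambda>i. if i \<in> \<nu> then mdecode \<nu> D (enc \<nu> D x) i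
          else if i \<in> {1..N} then mdecode ({1..N} - \<nu>) D (enc ({1..N} - \<nu>) D y) i else 0)
        = mix N \<nu> x y"
    unfolding mix_def using e1 e2 by (auto intro!: ext)
  then show "matricize N D W \<nu> $$ (enc \<nu> D x, enc ({1..N} - \<nu>) D y) = W (mix N \<nu> x y)"
  proof -
    have "matricize N D W \<nu> $$ (enc \<nu> D x, enc ({1..N} - \<nu>) D y) =
      W (\<lambda>i. if i \<in> \<nu> then mdecode \<nu> D (enc \<nu> D x) i
          else if i \<in> {1..N} then mdecode ({1..N} - \<nu>) D (enc ({1..N} - \<nu>) D y) i else 0)"
      unfolding matricize_def index_mat(1)[OF conjunct1[OF e1] conjunct1[OF e2]] case_prod_conv ..
    then show ?thesis by (simp only: fe)
  qed
qed

lemma rank_le1_minor: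
  fixes A :: "real mat"
  assumes A: "A \<in> carrier_mat n nc" and rk: "mat_rank A \<le> 1"
    and r: "r1 < n" "r2 < n" and c: "c1 < nc" "c2 < nc"
  shows "A$$(r1,c1)*A$$(r2,c2) = A$$(r1,c2)*A$$(r2,c1)"
proof (rule ccontr)
  assume ne: "A$$(r1,c1)*A$$(r2,c2) \<noteq> A$$(r1,c2)*A$$(r2,c1)"
  then have "r1 \<noteq> r2" "c1 \<noteq> c2" by (auto simp: mult.commute)
  with rank_ge2[OF A _ r _ c ne] rk show False by simp
qed

lemma minor_eq:
  assumes sub: "\<nu> \<subseteq> {1..N}" and rk: "mat_rank (matricize N D W \<nu>) \<le> 1"
    and v: "valid N D x" "valid N D x'" "valid N D y" "valid N D y'"
  shows "W (mix N \<nu> x y) * W (mix N \<nu> x' y') = W (mix N \<nu> x y') * W (mix N \<nu> x' y)"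
  using rank_le1_minor[OF mat_entry(1)[OF sub v(1) v(3)] rk
      mat_entry(2)[OF sub v(1) v(3)] mat_entry(2)[OF sub v(2) v(3)]
      mat_entry(3)[OF sub v(1) v(3)] mat_entry(3)[OF sub v(1) v(4)]]
  unfolding mat_entry(4)[OF sub v(1) v(3)] mat_entry(4)[OF sub v(2) v(4)]
    mat_entry(4)[OF sub v(1) v(4)] mat_entry(4)[OF sub v(2) v(3)] .

lemma rank_ge2_tensor:
  assumes sub: "\<nu> \<subseteq> {1..N}"
    and v: "valid N D x" "valid N D x'" "valid N D y" "valid N D y'"
    and ne: "W (mix N \<nu> x y) * W (mix N \<nu> x' y') \<noteq> W (mix N \<nu> x y') * W (mix N \<nu> x' y)"
  shows "2 \<le> mat_rank (matricize N D W \<nu>)"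
proof -
  have "\<not> mat_rank (matricize N D W \<nu>) \<le> 1" using minor_eq[OF sub _ v, of W] ne by blast
  then show ?thesis by simp
qed

lemma rank_ge1_tensor:
  assumes sub: "\<nu> \<subseteq> {1..N}" and v: "valid N D x" "valid N D y"
    and ne: "W (mix N \<nu> x y) \<noteq> 0"
  shows "1 \<le> mat_rank (matricize N D W \<nu>)"
  using rank_ge1[OF mat_entry(1)[OF sub v, of W] mat_entry(2,3)[OF sub v]] ne
  unfolding mat_entry(4)[OF sub v] by blast

lemma rank_le1_sep:
  assumes sub: "\<nu> \<subseteq> {1..N}"
    and W: "\<And>x. W x = F x * G x"
    and F: "\<And>x x'. (\<forall>i\<in>\<nu>. x i = x' i) \<Longrightarrow> F x = F x'"
    and G: "\<And>x x'. (\<forall>i\<in>{1..N} - \<nu>. x i = x' i) \<Longrightarrow> G x = G x'"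
  shows "mat_rank (matricize N D W \<nu>) \<le> 1"
proof -
  let ?A = "matricize N D W \<nu>"
  have A: "?A \<in> carrier_mat (dim_row ?A) (dim_col ?A)" by auto
  show ?thesis unfolding mat_rank_def
  proof (rule vec_space.rank_le_1_product_entries[OF A,
        of "\<lambda>r. F (\<lambda>i. mdecode \<nu> D r i)" "\<lambda>c. G (\<lambda>i. mdecode ({1..N} - \<nu>) D c i)"])
    fix r c assume "r < dim_row ?A" "c < dim_col ?A"
    then have "?A $$ (r,c) = W (\<lambda>i. if i \<in> \<nu> then mdecode \<nu> D r i
                      else if i \<in> {1..N} then mdecode ({1..N} - \<nu>) D c i else 0)"
      unfolding matricize_def by simp
    also have "\<dots> = F (\<lambda>i. mdecode \<nu> D r i) * G (\<lambda>i. mdecode ({1..N} - \<nu>) D c i)"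
      unfolding W by (intro arg_cong2[where f="(*)"] F G) auto
    finally show "?A $$ (r,c) = F (\<lambda>i. mdecode \<nu> D r i) * G (\<lambda>i. mdecode ({1..N} - \<nu>) D c i)" .
  qed
qed

lemma matricize_add:
  "matricize N D (\<lambda>x. V x + W x) \<nu> = matricize N D V \<nu> + matricize N D W \<nu>"
  unfolding matricize_def by (rule eq_matI) auto

lemma rank_add_le:
  "mat_rank (matricize N D (\<lambda>x. V x + W x) \<nu>) \<le>
     mat_rank (matricize N D V \<nu>) + mat_rank (matricize N D W \<nu>)"
proof -
  let ?n = "\<Prod>i\<in>\<nu>. D i" and ?m = "\<Prod>j\<in>{1..N} - \<nu>. D j"
  have A: "matricize N D V \<nu> \<in> carrier_mat ?n ?m" and B: "matricize N D W \<nu> \<in> carrier_mat ?n ?m"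
    unfolding matricize_def by auto
  have "dim_row (matricize N D V \<nu> + matricize N D W \<nu>) = ?n" using A B by simp
  then show ?thesis
    unfolding matricize_add mat_rank_def using vec_space.rank_subadditive[OF A B] A B by simp
qed

definition ind :: "nat set \<Rightarrow> (nat \<Rightarrow> nat) \<Rightarrow> (nat \<Rightarrow> nat) \<Rightarrow> real" where
  "ind S c x = (if \<forall>i\<in>S. x i = c i then 1 else 0)"

lemma ind_split: "ind S c x = ind (S \<inter> \<nu>) c x * ind (S - \<nu>) c x"
  unfolding ind_def by auto

lemma ind_dep: "(\<forall>i\<in>S. x i = x' i) \<Longrightarrow> ind S c x = ind S c x'"
  unfolding ind_def by auto

lemma rank_ind:
  assumes sub: "\<nu> \<subseteq> {1..N}" and S: "S \<subseteq> {1..N}"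
  shows "mat_rank (matricize N D (ind S c) \<nu>) \<le> 1"
  by (rule rank_le1_sep[OF sub, of _ "ind (S \<inter> \<nu>) c" "ind (S - \<nu>) c"])
     (use S in \<open>auto simp: ind_split[symmetric] intro!: ind_dep\<close>)



definition q :: "nat \<Rightarrow> nat \<Rightarrow> nat \<Rightarrow> nat \<Rightarrow> nat \<Rightarrow> nat \<Rightarrow> (nat \<Rightarrow> nat)" where
  "q N k m a b c = (\<lambda>i. if i = 1 then a else if i = k then b else if i = m then c
                         else if 4 \<le> i \<and> i \<le> N then 1 else 0)"

definition c1 :: "nat \<Rightarrow> nat" where "c1 = (\<lambda>i. 1)"
definition c2 :: "nat \<Rightarrow> nat" where "c2 = (\<lambda>i. if i \<le> 3 then 2 else 1)"
definition SS :: "nat \<Rightarrow> nat \<Rightarrow> nat set" where "SS N k = {1,k} \<union> {4..N}"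
definition WW :: "nat \<Rightarrow> nat \<Rightarrow> tensor" where
  "WW N k = (\<lambda>x. ind (SS N k) c1 x + ind (SS N k) c2 x)"

locale tcfg =
  fixes N k m :: nat and D :: "nat \<Rightarrow> nat"
  assumes N3: "3 \<le> N" and D2: "\<forall>i\<in>{1..N}. 2 \<le> D i"
    and km: "(k = 2 \<and> m = 3) \<or> (k = 3 \<and> m = 2)"
begin

lemma kne: "k \<noteq> 1" "m \<noteq> 1" "k \<noteq> m" "m \<noteq> k" "1 \<noteq> k" "1 \<noteq> m" "Suc 0 \<noteq> k" "Suc 0 \<noteq> m"
  "k \<noteq> Suc 0" "m \<noteq> Suc 0"
  using km by auto

lemma valid_q: "a \<in> {1,2} \<Longrightarrow> b \<in> {1,2} \<Longrightarrow> c \<in> {1,2} \<Longrightarrow> valid N D (q N k m a b c)"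
  unfolding valid_def
proof (intro ballI)
  fix i assume abc: "a \<in> {1,2}" "b \<in> {1,2}" "c \<in> {1,2}" and i: "i \<in> {1..N}"
  have "2 \<le> D i" using D2 i by blast
  moreover have "q N k m a b c i \<in> {1,2}"
  proof -
    have "i = 1 \<or> i = k \<or> i = m \<or> 4 \<le> i" using i km by auto
    then show ?thesis using abc i unfolding q_def by auto
  qed
  ultimately show "1 \<le> q N k m a b c i \<and> q N k m a b c i \<le> D i" by auto
qed

lemma mix_q:
  assumes "\<nu> \<subseteq> {1..N}"
  shows "mix N \<nu> (q N k m a b c) (q N k m a' b' c') =
    q N k m (if 1 \<in> \<nu> then a else a') (if k \<in> \<nu> then b else b') (if m \<in> \<nu> then c else c')"
proof (rule ext)
  fix i
  have kN: "k \<in> {1..N}" "m \<in> {1..N}" using km N3 by auto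
  consider "i = 1" | "i = k" | "i = m" | "i \<noteq> 1" "i \<noteq> k" "i \<noteq> m" by blast
  then show "mix N \<nu> (q N k m a b c) (q N k m a' b' c') i =
    q N k m (if 1 \<in> \<nu> then a else a') (if k \<in> \<nu> then b else b') (if m \<in> \<nu> then c else c') i"
  proof cases
    case 1 then show ?thesis unfolding mix_def q_def using N3 by simp
  next
    case 2 then show ?thesis unfolding mix_def q_def using kN kne by simp
  next
    case 3 then show ?thesis unfolding mix_def q_def using kN kne by simp
  next
    case 4 then show ?thesis unfolding mix_def q_def using assms by auto
  qed
qed

lemma ind_q: "ind (SS N k) c (q N k m a b c') = (if a = c 1 \<and> b = c k \<and> (\<forall>i\<in>{4..N}. c i = 1) then 1 else 0)"
proof -
  have q4: "q N k m a b c' i = 1" if "i \<in> {4..N}" for i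
    using that km unfolding q_def by auto
  have "(\<forall>i\<in>SS N k. q N k m a b c' i = c i) \<longleftrightarrow> a = c 1 \<and> b = c k \<and> (\<forall>i\<in>{4..N}. c i = 1)"
    unfolding SS_def using q4 kne by (auto simp: q_def)
  then show ?thesis unfolding ind_def by simp
qed

lemma WW_q: "WW N k (q N k m a b c) = (if a = 1 \<and> b = 1 then 1 else 0) + (if a = 2 \<and> b = 2 then 1 else 0)"
proof -
  have "k \<le> 3" using km by auto
  then show ?thesis unfolding WW_def ind_q by (simp add: c1_def c2_def)
qed

lemma SS_sub: "SS N k \<subseteq> {1..N}" unfolding SS_def using km N3 by auto

lemma G1:
  assumes sub: "\<nu> \<subseteq> {1..N}" and ns: "1 \<in> \<nu> \<longleftrightarrow> k \<in> \<nu>"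
  shows "mat_rank (matricize N D (WW N k) \<nu>) \<le> 1"
proof -
  let ?S = "SS N k"
  have eqc: "ind (?S - \<nu>) c2 x = ind (?S - \<nu>) c1 x" if "1 \<in> \<nu>" for x
    unfolding ind_def SS_def c1_def c2_def using that ns km by auto
  have eqc': "ind (?S \<inter> \<nu>) c2 x = ind (?S \<inter> \<nu>) c1 x" if "1 \<notin> \<nu>" for x
    unfolding ind_def SS_def c1_def c2_def using that ns km by auto
  show ?thesis
  proof (cases "1 \<in> \<nu>")
    case True
    show ?thesis
    proof (rule rank_le1_sep[OF sub, of _ "\<lambda>x. ind (?S \<inter> \<nu>) c1 x + ind (?S \<inter> \<nu>) c2 x" "ind (?S - \<nu>) c1"])
      fix x show "WW N k x = (ind (?S \<inter> \<nu>) c1 x + ind (?S \<inter> \<nu>) c2 x) * ind (?S - \<nu>) c1 x"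
        unfolding WW_def using ind_split[of ?S c1 x \<nu>] ind_split[of ?S c2 x \<nu>] eqc[OF True, of x]
        by (simp add: algebra_simps)
    next
      fix x x' :: "nat \<Rightarrow> nat" assume "\<forall>i\<in>\<nu>. x i = x' i"
      then show "ind (?S \<inter> \<nu>) c1 x + ind (?S \<inter> \<nu>) c2 x = ind (?S \<inter> \<nu>) c1 x' + ind (?S \<inter> \<nu>) c2 x'"
        using ind_dep[of "?S \<inter> \<nu>" x x'] by auto
    next
      fix x x' :: "nat \<Rightarrow> nat" assume "\<forall>i\<in>{1..N} - \<nu>. x i = x' i"
      then show "ind (?S - \<nu>) c1 x = ind (?S - \<nu>) c1 x'"
        using ind_dep[of "?S - \<nu>" x x'] SS_sub by auto
    qed
  next
    case False
    show ?thesis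
    proof (rule rank_le1_sep[OF sub, of _ "ind (?S \<inter> \<nu>) c1" "\<lambda>x. ind (?S - \<nu>) c1 x + ind (?S - \<nu>) c2 x"])
      fix x show "WW N k x = ind (?S \<inter> \<nu>) c1 x * (ind (?S - \<nu>) c1 x + ind (?S - \<nu>) c2 x)"
        unfolding WW_def using ind_split[of ?S c1 x \<nu>] ind_split[of ?S c2 x \<nu>] eqc'[OF False, of x]
        by (simp add: algebra_simps)
    next
      fix x x' :: "nat \<Rightarrow> nat" assume "\<forall>i\<in>\<nu>. x i = x' i"
      then show "ind (?S \<inter> \<nu>) c1 x = ind (?S \<inter> \<nu>) c1 x'"
        using ind_dep[of "?S \<inter> \<nu>" x x'] by auto
    next
      fix x x' :: "nat \<Rightarrow> nat" assume "\<forall>i\<in>{1..N} - \<nu>. x i = x' i"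
      then have "\<forall>i\<in>?S - \<nu>. x i = x' i" using SS_sub by auto
      then show "ind (?S - \<nu>) c1 x + ind (?S - \<nu>) c2 x = ind (?S - \<nu>) c1 x' + ind (?S - \<nu>) c2 x'"
        using ind_dep[of "?S - \<nu>" x x'] by simp
    qed
  qed
qed

lemma G2:
  assumes sub: "\<nu> \<subseteq> {1..N}"
  shows "mat_rank (matricize N D (WW N k) \<nu>) \<le> 2"
proof -
  have "mat_rank (matricize N D (WW N k) \<nu>) \<le>
     mat_rank (matricize N D (ind (SS N k) c1) \<nu>) + mat_rank (matricize N D (ind (SS N k) c2) \<nu>)"
    unfolding WW_def by (rule rank_add_le)
  also have "\<dots> \<le> 1 + 1" using rank_ind[OF sub SS_sub] by (intro add_mono) auto
  finally show ?thesis by simp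
qed

lemma G3: "2 \<le> mat_rank (matricize N D (WW N k) {k})"
proof -
  have sub: "{k} \<subseteq> {1..N}" using km N3 by auto
  show ?thesis
    apply (rule rank_ge2_tensor[OF sub valid_q valid_q valid_q valid_q,
          of 1 1 1 2 2 2 1 1 1 2 2 2])
    by (simp_all add: mix_q[OF sub] WW_q kne)
qed

lemma G4:
  assumes sub: "\<nu> \<subseteq> {1..N}" and sp: "\<not> (1 \<in> \<nu> \<longleftrightarrow> k \<in> \<nu>)"
    and rk: "mat_rank (matricize N D W \<nu>) \<le> 1"
    and rkm: "mat_rank (matricize N D W {m}) \<le> 1"
    and w111: "W (q N k m 1 1 1) = 1" and w222: "W (q N k m 2 2 2) = 1"
    and w122: "W (q N k m 1 2 2) = 0" and w211: "W (q N k m 2 1 1) = 0"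
  shows False
proof -
  have subm: "{m} \<subseteq> {1..N}" using km N3 by auto
  have "W (q N k m 1 1 1) * W (q N k m 2 2 2) = W (q N k m 2 2 1) * W (q N k m 1 1 2)"
    using minor_eq[OF subm rkm valid_q valid_q valid_q valid_q, of 1 1 1 2 2 2 1 1 1 2 2 2]
    by (simp add: mix_q[OF subm] kne)
  then have M: "W (q N k m 2 2 1) * W (q N k m 1 1 2) = 1" using w111 w222 by simp
  note me = minor_eq[OF sub rk valid_q valid_q valid_q valid_q]
  show False
  proof (cases "1 \<in> \<nu>")
    case T1: True
    then have nk: "k \<notin> \<nu>" using sp by auto
    show False
    proof (cases "m \<in> \<nu>")
      case True
      show False using me[of 1 1 2 2 1 1 1 1 1 2 2 2] M w122 w211 T1 nk True
        by (simp add: mix_q[OF sub] mult.commute kne)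
    next
      case False
      show False using me[of 1 1 1 2 2 2 1 1 1 2 2 2] w111 w222 w122 w211 T1 nk False
        by (simp add: mix_q[OF sub] kne)
    qed
  next
    case T1: False
    then have nk: "k \<in> \<nu>" using sp by auto
    show False
    proof (cases "m \<in> \<nu>")
      case True
      show False using me[of 1 1 1 2 2 2 1 1 1 2 2 2] w111 w222 w122 w211 T1 nk True
        by (simp add: mix_q[OF sub] kne)
    next
      case False
      show False using me[of 1 1 1 2 2 2 1 1 2 2 2 1] M w122 w211 T1 nk False
        by (simp add: mix_q[OF sub] mult.commute kne)
    qed
  qed
qed

end



lemma mode_tree_props: "mode_tree S T \<Longrightarrow> (\<forall>\<nu>\<in>T. \<nu> \<subseteq> S) \<and> (\<forall>i\<in>S. {i} \<in> T)"
proof (induction rule: mode_tree.induct)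
  case (leaf i)
  then show ?case by auto
next
  case (node P S Tt)
  have IH: "\<And>B. B \<in> P \<Longrightarrow> (\<forall>\<nu>\<in>Tt B. \<nu> \<subseteq> B) \<and> (\<forall>i\<in>B. {i} \<in> Tt B)"
    using node.IH by blast
  have U: "\<Union>P = S" using node.hyps by blast
  have A: "\<forall>\<nu>\<in>insert S (\<Union>B\<in>P. Tt B). \<nu> \<subseteq> S"
  proof
    fix \<nu> assume "\<nu> \<in> insert S (\<Union>B\<in>P. Tt B)"
    then consider "\<nu> = S" | B where "B \<in> P" "\<nu> \<in> Tt B" by blast
    then show "\<nu> \<subseteq> S"
    proof cases
      case 1 then show ?thesis by simp
    next
      case 2
      then have "\<nu> \<subseteq> B" using IH by blast
      moreover have "B \<subseteq> S" using U 2(1) by blast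
      ultimately show ?thesis by blast
    qed
  qed
  have B: "\<forall>i\<in>S. {i} \<in> insert S (\<Union>B\<in>P. Tt B)"
  proof
    fix i assume "i \<in> S"
    then obtain B where B: "B \<in> P" "i \<in> B" using U by blast
    then have "{i} \<in> Tt B" using IH by blast
    then show "{i} \<in> insert S (\<Union>B\<in>P. Tt B)" using B(1) by blast
  qed
  show ?case using A B by (rule conjI)
qed

lemma loss_zero:
  assumes "finite \<Omega>" "\<Omega> \<noteq> {}"
  shows "loss N D Ws \<Omega> W = 0 \<longleftrightarrow> (\<forall>d\<in>\<Omega>. W d = Ws d)"
proof -
  have c: "1 / real (card \<Omega>) \<noteq> 0" using assms by auto
  have "loss N D Ws \<Omega> W = 0 \<longleftrightarrow> (\<Sum>d\<in>\<Omega>. (W d - Ws d)\<^sup>2) = 0"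
    unfolding loss_def using c by simp
  also have "\<dots> \<longleftrightarrow> (\<forall>d\<in>\<Omega>. (W d - Ws d)\<^sup>2 = 0)"
    by (rule sum_nonneg_eq_0_iff[OF assms(1)]) auto
  also have "\<dots> \<longleftrightarrow> (\<forall>d\<in>\<Omega>. W d = Ws d)" by simp
  finally show ?thesis .
qed

context tcfg
begin

lemma minimal:
  assumes Tsub: "\<forall>\<nu>\<in>T. \<nu> \<subseteq> {1..N}" and mT: "{m} \<in> T" and mN: "{m} \<noteq> {1..N}"
    and w111: "W (q N k m 1 1 1) = 1" and w222: "W (q N k m 2 2 2) = 1"
    and w122: "W (q N k m 1 2 2) = 0" and w211: "W (q N k m 2 1 1) = 0"
    and le: "tuple_le N T (htrank N D T W) (htrank N D T (WW N k))"
  shows "htrank N D T W = htrank N D T (WW N k)"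
proof (rule ext)
  fix \<nu>
  show "htrank N D T W \<nu> = htrank N D T (WW N k) \<nu>"
  proof (cases "\<nu> \<in> T - {{1..N}}")
    case False
    then show ?thesis unfolding htrank_def by (simp only: if_False)
  next
    case True
    then have sub: "\<nu> \<subseteq> {1..N}" using Tsub by blast
    have "htrank N D T W \<nu> \<le> htrank N D T (WW N k) \<nu>"
      using le True unfolding tuple_le_def by blast
    then have rle: "mat_rank (matricize N D W \<nu>) \<le> mat_rank (matricize N D (WW N k) \<nu>)"
      unfolding htrank_def if_P[OF True] .
    have v1: "valid N D (q N k m 1 1 1)" by (rule valid_q) auto
    have "mix N \<nu> (q N k m 1 1 1) (q N k m 1 1 1) = q N k m 1 1 1"
      unfolding mix_q[OF sub] by simp
    then have ge1: "1 \<le> mat_rank (matricize N D W \<nu>)"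
      using rank_ge1_tensor[OF sub v1 v1, of W] w111 by simp
    have eq: "mat_rank (matricize N D W \<nu>) = mat_rank (matricize N D (WW N k) \<nu>)"
    proof (cases "1 \<in> \<nu> \<longleftrightarrow> k \<in> \<nu>")
      case True
      then show ?thesis using G1[OF sub True] ge1 rle by simp
    next
      case False
      have subm: "{m} \<subseteq> {1..N}" using km N3 by auto
      have mTT: "{m} \<in> T - {{1..N}}" using mT mN by blast
      have "htrank N D T W {m} \<le> htrank N D T (WW N k) {m}"
        using le mTT unfolding tuple_le_def by blast
      then have "mat_rank (matricize N D W {m}) \<le> mat_rank (matricize N D (WW N k) {m})"
        unfolding htrank_def if_P[OF mTT] .
      also have "\<dots> \<le> 1" by (rule G1[OF subm]) (use kne in auto)
      finally have rkm: "mat_rank (matricize N D W {m}) \<le> 1" .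
      have "\<not> mat_rank (matricize N D W \<nu>) \<le> 1"
        using G4[OF sub False _ rkm w111 w222 w122 w211] by blast
      then show ?thesis using G2[OF sub] rle by simp
    qed
    then show ?thesis unfolding htrank_def if_P[OF True] .
  qed
qed

end



lemma q_swap: "q N 3 2 a b c = q N 2 3 a c b"
  unfolding q_def by (auto intro!: ext)

lemma q_idx:
  assumes "3 \<le> N" "\<forall>i\<in>{1..N}. 2 \<le> D i" "a \<in> {1,2}" "b \<in> {1,2}" "c \<in> {1,2}"
  shows "q N 2 3 a b c \<in> tensor_idx N D"
proof -
  interpret A: tcfg N 2 3 D using assms(1,2) by unfold_locales auto
  have v: "valid N D (q N 2 3 a b c)" using A.valid_q assms(3-5) by blast
  have z: "q N 2 3 a b c i = 0" if "i \<notin> {1..N}" for i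
    using that assms(1) unfolding q_def by auto
  show ?thesis using v z unfolding tensor_idx_def valid_def by auto
qed

theorem proposition2:
  fixes N :: nat and D :: "nat \<Rightarrow> nat"
  assumes "N \<ge> 3" and "\<forall>i\<in>{1..N}. D i \<ge> 2"
  shows "\<exists>Wstar \<Omega>. \<Omega> \<subseteq> tensor_idx N D \<and> \<Omega> \<noteq> {} \<and>
           (\<forall>T. mode_tree {1..N} T \<longrightarrow>
              (\<exists>R R'. R \<in> rank_set N D T Wstar \<Omega> \<and> R' \<in> rank_set N D T Wstar \<Omega> \<and>
                 \<not> (\<exists>R''\<in>rank_set N D T Wstar \<Omega> - {R, R'}.
                       tuple_le N T R'' R \<or> tuple_le N T R'' R') \<and>
                 \<not> tuple_le N T R R' \<and> \<not> tuple_le N T R' R))"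
proof -
  interpret A: tcfg N 2 3 D using assms by unfold_locales auto
  interpret B: tcfg N 3 2 D using assms by unfold_locales auto
  define \<Omega> where "\<Omega> = {q N 2 3 1 1 1, q N 2 3 2 2 2, q N 2 3 1 2 2, q N 2 3 2 1 1}"
  have fin: "finite \<Omega>" and ne: "\<Omega> \<noteq> {}" unfolding \<Omega>_def by auto
  have idx: "\<Omega> \<subseteq> tensor_idx N D" unfolding \<Omega>_def using q_idx[OF assms] by auto
  have W2v: "WW N 2 (q N 2 3 1 1 1) = 1" "WW N 2 (q N 2 3 2 2 2) = 1"
    "WW N 2 (q N 2 3 1 2 2) = 0" "WW N 2 (q N 2 3 2 1 1) = 0"
    by (simp_all add: A.WW_q)
  have W3v: "WW N 3 (q N 2 3 1 1 1) = 1" "WW N 3 (q N 2 3 2 2 2) = 1"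
    "WW N 3 (q N 2 3 1 2 2) = 0" "WW N 3 (q N 2 3 2 1 1) = 0"
    using B.WW_q[of 1 1 1] B.WW_q[of 2 2 2] B.WW_q[of 1 2 2] B.WW_q[of 2 1 1]
    by (simp_all add: q_swap)
  have lossiff: "loss N D (WW N 2) \<Omega> W = 0 \<longleftrightarrow>
      W (q N 2 3 1 1 1) = 1 \<and> W (q N 2 3 2 2 2) = 1 \<and> W (q N 2 3 1 2 2) = 0 \<and> W (q N 2 3 2 1 1) = 0"
    for W
    unfolding loss_zero[OF fin ne] unfolding \<Omega>_def using W2v by auto
  show ?thesis
  proof (intro exI conjI allI impI)
    show "\<Omega> \<subseteq> tensor_idx N D" by (rule idx)
    show "\<Omega> \<noteq> {}" by (rule ne)
    fix T assume mt: "mode_tree {1..N} T"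
    have Tsub: "\<forall>\<nu>\<in>T. \<nu> \<subseteq> {1..N}" and sing: "\<forall>i\<in>{1..N}. {i} \<in> T"
      using mode_tree_props[OF mt] by auto
    have T2: "{2} \<in> T" "{3} \<in> T" using sing assms(1) by auto
    have o: "(1::nat) \<in> {1..N}" "(1::nat) \<notin> {2}" "(1::nat) \<notin> {3}" using assms(1) by auto
    have N2: "{2} \<noteq> {1..N}" "{3} \<noteq> {1..N}" using o by blast+
    have TT: "{2} \<in> T - {{1..N}}" "{3} \<in> T - {{1..N}}" using T2 N2 by auto
    define R where "R = htrank N D T (WW N 2)"
    define R' where "R' = htrank N D T (WW N 3)"
    have RS: "R \<in> rank_set N D T (WW N 2) \<Omega>"
      unfolding rank_set_def R_def using lossiff[of "WW N 2"] W2v by auto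
    have RS': "R' \<in> rank_set N D T (WW N 2) \<Omega>"
      unfolding rank_set_def R'_def using lossiff[of "WW N 3"] W3v by auto
    have sub2: "{2} \<subseteq> {1..N}" and sub3: "{3} \<subseteq> {1..N}" using assms(1) by auto
    have R2: "2 \<le> R {2}" unfolding R_def htrank_def using TT A.G3 by simp
    have R'2: "R' {2} \<le> 1" unfolding R'_def htrank_def using TT B.G1[OF sub2] by simp
    have R'3: "2 \<le> R' {3}" unfolding R'_def htrank_def using TT B.G3 by simp
    have R3: "R {3} \<le> 1" unfolding R_def htrank_def using TT A.G1[OF sub3] by simp
    show "R \<in> rank_set N D T (WW N 2) \<Omega>" by (rule RS)
    show "R' \<in> rank_set N D T (WW N 2) \<Omega>" by (rule RS')
    show "\<not> tuple_le N T R R'"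
      unfolding tuple_le_def
    proof
      assume "\<forall>\<nu>\<in>T - {{1..N}}. R \<nu> \<le> R' \<nu>"
      then have "R {2} \<le> R' {2}" using TT(1) by blast
      then show False using R2 R'2 by simp
    qed
    show "\<not> tuple_le N T R' R"
      unfolding tuple_le_def
    proof
      assume "\<forall>\<nu>\<in>T - {{1..N}}. R' \<nu> \<le> R \<nu>"
      then have "R' {3} \<le> R {3}" using TT(2) by blast
      then show False using R3 R'3 by simp
    qed
    show "\<not> (\<exists>R''\<in>rank_set N D T (WW N 2) \<Omega> - {R, R'}. tuple_le N T R'' R \<or> tuple_le N T R'' R')"
    proof
      assume "\<exists>R''\<in>rank_set N D T (WW N 2) \<Omega> - {R, R'}. tuple_le N T R'' R \<or> tuple_le N T R'' R'"
      then obtain R'' where R''S: "R'' \<in> rank_set N D T (WW N 2) \<Omega>" and nR: "R'' \<noteq> R" "R'' \<noteq> R'"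
        and le: "tuple_le N T R'' R \<or> tuple_le N T R'' R'" by blast
      from R''S obtain W where RW: "R'' = htrank N D T W" and l0: "loss N D (WW N 2) \<Omega> W = 0"
        unfolding rank_set_def by blast
      have wv: "W (q N 2 3 1 1 1) = 1" "W (q N 2 3 2 2 2) = 1" "W (q N 2 3 1 2 2) = 0" "W (q N 2 3 2 1 1) = 0"
        using l0 lossiff by auto
      from le show False
      proof
        assume "tuple_le N T R'' R"
        then have "R'' = R" unfolding RW R_def
          by (rule A.minimal[OF Tsub T2(2) N2(2) wv])
        then show False using nR by simp
      next
        assume le': "tuple_le N T R'' R'"
        have wv': "W (q N 3 2 1 1 1) = 1" "W (q N 3 2 2 2 2) = 1" "W (q N 3 2 1 2 2) = 0" "W (q N 3 2 2 1 1) = 0"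
          using wv by (simp_all add: q_swap)
        have "R'' = R'" using le' unfolding RW R'_def
          by (rule B.minimal[OF Tsub T2(1) N2(1) wv'])
        then show False using nR by simp
      qed
    qed
  qed
qed

end
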